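(* Let $H$ be a connected graph with vertices $v_1,\ldots,v_d$, let $\Gamma$ be a finite group with identity $e$, and let $D=\{\gamma_1,\ldots,\gamma_d\}\subseteq\Gamma$ with $|D|=d$. Let $\widetilde{H}$ be the graph with vertex set $\Gamma$ and edge set $\{(\gamma\gamma_i,\gamma\gamma_j): \gamma\in\Gamma,\ v_iv_j\in E(H)\}$, and for $\gamma\in\Gamma$ let $\widetilde{H}_\gamma$ be the subgraph of $\widetilde{H}$ induced by $\{\gamma\gamma_1,\ldots,\gamma\gamma_d\}$. Then: a) If $(\Gamma,D)$ satisfies condition $\mathcal{G}(2)$ then $\widetilde{H}$ is a cluster of $|\Gamma|$ copies of $H$ (namely of the subgraphs $\widetilde{H}_\gamma$, $\gamma\in\Gamma$). b) If $(\Gamma,D)$ satisfies condition $\mathcal{G}(p)$ then the cluster-girth of $\widetilde{H}$ (with respect to the parts $\widetilde{H}_\gamma$, $\gamma\in\Gamma$) is at least $p+1$. c) The connected components of $\widetilde{H}$ are pairwise isomorphic, and the component containing $e$ is a Cayley graph of some subgroup of $\Gamma$.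
   Context: For $p\geq 1$, the pair $(\Gamma,D)$ satisfies condition $\mathcal{R}(p)$ if for every sequence of indices $i_0,\ldots,i_{2p-1}\in\{1,\ldots,d\}$ the equality $\gamma_{i_0}\gamma_{i_1}^{-1}\gamma_{i_2}\gamma_{i_3}^{-1}\cdots\gamma_{i_{2p-2}}\gamma_{i_{2p-1}}^{-1}=e$ implies $i_l=i_{l+1}$ for some $l\in\{0,\ldots,2p-1\}$ (indices modulo $2p$). It satisfies $\mathcal{G}(p)$ if it satisfies $\mathcal{R}(1),\ldots,\mathcal{R}(p)$. A finite graph $X$ is a cluster of induced subgraphs $X_1,\ldots,X_k$ (its parts) if $X=X_1\cup\cdots\cup X_k$ and for all $i\neq j$, $X_i\cap X_j$ is empty or a single vertex. The cluster-girth (with respect to parts $X_1,\ldots,X_k$) is the smallest $l\geq 3$ such that there exist pairwise distinct vertices $v_0,\ldots,v_{l-1}$ and pairwise distinct indices $i_0,\ldots,i_{l-1}$ with $v_j\in V(X_{i_{j-1}})\cap V(X_{i_j})$ for $j=0,\ldots,l-1$ (indices modulo $l$); it is infinite if no such cycle exists. *)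

theory Defs
  imports "HOL-Algebra.Group" "HOL-Library.Extended_Nat"
begin

text \<open>The base graph H has vertices 0..<d (standing for v_1..v_d) and a symmetric,
irreflexive edge relation E with all edges inside {..<d}.  The set D is given by an
injective map g : {..<d} -> carrier G (g i standing for gamma_(i+1)).\<close>

definition simple_graph_on :: "nat \<Rightarrow> (nat \<Rightarrow> nat \<Rightarrow> bool) \<Rightarrow> bool" where
  "simple_graph_on d E \<longleftrightarrow>
     (\<forall>i j. E i j \<longrightarrow> i < d \<and> j < d) \<and> (\<forall>i j. E i j \<longrightarrow> E j i) \<and> (\<forall>i. \<not> E i i)"

definition connected_graph_on :: "nat \<Rightarrow> (nat \<Rightarrow> nat \<Rightarrow> bool) \<Rightarrow> bool" where
  "connected_graph_on d E \<longleftrightarrow> 0 < d \<and> (\<forall>i<d. \<forall>j<d. E\<^sup>*\<^sup>* i j)"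

definition alt_prod :: "('a, 'b) monoid_scheme \<Rightarrow> (nat \<Rightarrow> 'a) \<Rightarrow> (nat \<Rightarrow> nat) \<Rightarrow> nat \<Rightarrow> 'a" where
  "alt_prod G g idx p =
     foldr (\<lambda>k acc. g (idx (2*k)) \<otimes>\<^bsub>G\<^esub> inv\<^bsub>G\<^esub> (g (idx (2*k+1))) \<otimes>\<^bsub>G\<^esub> acc) [0..<p] \<one>\<^bsub>G\<^esub>"

definition cond_R :: "('a, 'b) monoid_scheme \<Rightarrow> (nat \<Rightarrow> 'a) \<Rightarrow> nat \<Rightarrow> nat \<Rightarrow> bool" where
  "cond_R G g d p \<longleftrightarrow>
     (\<forall>idx. (\<forall>l<2*p. idx l < d) \<longrightarrow> alt_prod G g idx p = \<one>\<^bsub>G\<^esub> \<longrightarrow>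
        (\<exists>l<2*p. idx l = idx ((l + 1) mod (2*p))))"

definition cond_G :: "('a, 'b) monoid_scheme \<Rightarrow> (nat \<Rightarrow> 'a) \<Rightarrow> nat \<Rightarrow> nat \<Rightarrow> bool" where
  "cond_G G g d p \<longleftrightarrow> (\<forall>q. 1 \<le> q \<and> q \<le> p \<longrightarrow> cond_R G g d q)"

definition lift_edges :: "('a, 'b) monoid_scheme \<Rightarrow> (nat \<Rightarrow> 'a) \<Rightarrow> nat \<Rightarrow> (nat \<Rightarrow> nat \<Rightarrow> bool) \<Rightarrow> 'a \<Rightarrow> 'a \<Rightarrow> bool" where
  "lift_edges G g d E x y \<longleftrightarrow>
     (\<exists>\<gamma>\<in>carrier G. \<exists>i<d. \<exists>j<d. E i j \<and> x = \<gamma> \<otimes>\<^bsub>G\<^esub> g i \<and> y = \<gamma> \<otimes>\<^bsub>G\<^esub> g j)"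

text \<open>Vertex set of H-tilde_gamma (an induced subgraph, determined by its vertex set).\<close>
definition part :: "('a, 'b) monoid_scheme \<Rightarrow> (nat \<Rightarrow> 'a) \<Rightarrow> nat \<Rightarrow> 'a \<Rightarrow> 'a set" where
  "part G g d \<gamma> = (\<lambda>i. \<gamma> \<otimes>\<^bsub>G\<^esub> g i) ` {..<d}"

definition graph_iso :: "'u set \<Rightarrow> ('u \<Rightarrow> 'u \<Rightarrow> bool) \<Rightarrow> 'v set \<Rightarrow> ('v \<Rightarrow> 'v \<Rightarrow> bool) \<Rightarrow> bool" where
  "graph_iso V1 E1 V2 E2 \<longleftrightarrow>
     (\<exists>f. bij_betw f V1 V2 \<and> (\<forall>x\<in>V1. \<forall>y\<in>V1. E1 x y \<longleftrightarrow> E2 (f x) (f y)))"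

definition is_cluster :: "'v set \<Rightarrow> ('v \<Rightarrow> 'v \<Rightarrow> bool) \<Rightarrow> 'i set \<Rightarrow> ('i \<Rightarrow> 'v set) \<Rightarrow> bool" where
  "is_cluster V E I X \<longleftrightarrow>
     (\<forall>i\<in>I. X i \<subseteq> V) \<and> V = (\<Union>i\<in>I. X i) \<and>
     (\<forall>x y. E x y \<longrightarrow> (\<exists>i\<in>I. x \<in> X i \<and> y \<in> X i)) \<and>
     (\<forall>i\<in>I. \<forall>j\<in>I. i \<noteq> j \<longrightarrow> X i \<inter> X j = {} \<or> (\<exists>v. X i \<inter> X j = {v}))"

definition cluster_cycle :: "'i set \<Rightarrow> ('i \<Rightarrow> 'v set) \<Rightarrow> nat \<Rightarrow> bool" where
  "cluster_cycle I X l \<longleftrightarrow>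
     (\<exists>v c. inj_on v {..<l} \<and> inj_on c {..<l} \<and>
        (\<forall>j<l. c j \<in> I \<and> v j \<in> X (c ((j + l - 1) mod l)) \<and> v j \<in> X (c j)))"

definition cluster_girth :: "'i set \<Rightarrow> ('i \<Rightarrow> 'v set) \<Rightarrow> enat" where
  "cluster_girth I X = (INF l\<in>{l. 3 \<le> l \<and> cluster_cycle I X l}. enat l)"

definition component :: "('v \<Rightarrow> 'v \<Rightarrow> bool) \<Rightarrow> 'v \<Rightarrow> 'v set" where
  "component E x = {y. E\<^sup>*\<^sup>* x y}"

definition is_cayley_graph :: "('a, 'b) monoid_scheme \<Rightarrow> 'a set \<Rightarrow> 'a set \<Rightarrow> 'a set \<Rightarrow> ('a \<Rightarrow> 'a \<Rightarrow> bool) \<Rightarrow> bool" where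
  "is_cayley_graph G K S V E \<longleftrightarrow>
     subgroup K G \<and> S \<subseteq> K \<and> \<one>\<^bsub>G\<^esub> \<notin> S \<and> (\<forall>s\<in>S. inv\<^bsub>G\<^esub> s \<in> S) \<and> V = K \<and>
     (\<forall>x\<in>K. \<forall>y\<in>K. E x y \<longleftrightarrow> inv\<^bsub>G\<^esub> x \<otimes>\<^bsub>G\<^esub> y \<in> S)"

end

theory Submission
  imports Defs
begin


context group begin

lemma lift_char:
  assumes gc: "g ` {..<d} \<subseteq> carrier G"
  shows "lift_edges G g d E x y \<longleftrightarrow> x \<in> carrier G \<and> (\<exists>i<d. \<exists>j<d. E i j \<and> y = x \<otimes> inv (g i) \<otimes> g j)"
proof
  assume "lift_edges G g d E x y"
  then obtain \<gamma> i j where h: "\<gamma> \<in> carrier G" "i<d" "j<d" "E i j" "x = \<gamma> \<otimes> g i" "y = \<gamma> \<otimes> g j"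
    unfolding lift_edges_def by blast
  have gi: "g i \<in> carrier G" "g j \<in> carrier G" using gc h by auto
  have "y = x \<otimes> inv (g i) \<otimes> g j" using h gi by (simp add: m_assoc)
  then show "x \<in> carrier G \<and> (\<exists>i<d. \<exists>j<d. E i j \<and> y = x \<otimes> inv (g i) \<otimes> g j)"
    using h gi by blast
next
  assume "x \<in> carrier G \<and> (\<exists>i<d. \<exists>j<d. E i j \<and> y = x \<otimes> inv (g i) \<otimes> g j)"
  then obtain i j where h: "x \<in> carrier G" "i<d" "j<d" "E i j" "y = x \<otimes> inv (g i) \<otimes> g j" by blast
  have gi: "g i \<in> carrier G" "g j \<in> carrier G" using gc h by auto
  have "x = (x \<otimes> inv (g i)) \<otimes> g i" using h gi by (simp add: m_assoc)
  then show "lift_edges G g d E x y" unfolding lift_edges_def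
    using h gi by (intro bexI[of _ "x \<otimes> inv (g i)"]) auto
qed

lemma lift_carrier:
  assumes gc: "g ` {..<d} \<subseteq> carrier G" and "lift_edges G g d E x y"
  shows "x \<in> carrier G" "y \<in> carrier G"
  using assms unfolding lift_char[OF gc] by (auto intro!: m_closed inv_closed)

lemma lift_mult:
  assumes gc: "g ` {..<d} \<subseteq> carrier G" and a: "a \<in> carrier G" and x: "x \<in> carrier G" and y: "y \<in> carrier G"
  shows "lift_edges G g d E (a \<otimes> x) (a \<otimes> y) \<longleftrightarrow> lift_edges G g d E x y"
proof -
  have "\<And>i j. i < d \<Longrightarrow> j < d \<Longrightarrow> (a \<otimes> y = a \<otimes> x \<otimes> inv (g i) \<otimes> g j) \<longleftrightarrow> (y = x \<otimes> inv (g i) \<otimes> g j)"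
  proof -
    fix i j assume "i < d" "j < d"
    then have gi: "g i \<in> carrier G" "g j \<in> carrier G" using gc by auto
    show "(a \<otimes> y = a \<otimes> x \<otimes> inv (g i) \<otimes> g j) \<longleftrightarrow> (y = x \<otimes> inv (g i) \<otimes> g j)"
      using gi a x y by (simp add: m_assoc)
  qed
  then show ?thesis unfolding lift_char[OF gc] using a x y by auto
qed

lemma lift_sym:
  assumes gc: "g ` {..<d} \<subseteq> carrier G" and sym: "\<And>i j. E i j \<Longrightarrow> E j i"
    and "lift_edges G g d E x y"
  shows "lift_edges G g d E y x"
  using assms unfolding lift_edges_def by blast

lemma rt_carrier:
  assumes gc: "g ` {..<d} \<subseteq> carrier G" and "(lift_edges G g d E)\<^sup>*\<^sup>* x y" and "x \<in> carrier G"
  shows "y \<in> carrier G"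
  using assms(2,3) by induction (auto dest: lift_carrier[OF gc])

lemma rt_mult:
  assumes gc: "g ` {..<d} \<subseteq> carrier G" and "(lift_edges G g d E)\<^sup>*\<^sup>* x y" and "x \<in> carrier G"
    and a: "a \<in> carrier G"
  shows "(lift_edges G g d E)\<^sup>*\<^sup>* (a \<otimes> x) (a \<otimes> y)"
  using assms(2,3)
proof induction
  case base then show ?case by simp
next
  case (step y z)
  have "y \<in> carrier G" using rt_carrier[OF gc step(1) step(4)] .
  moreover have "z \<in> carrier G" using lift_carrier[OF gc step(2)] by simp
  ultimately have "lift_edges G g d E (a \<otimes> y) (a \<otimes> z)" using lift_mult[OF gc a] step(2) by simp
  then show ?case using step by (meson rtranclp.rtrancl_into_rtrancl)
qed


lemma rt_sym:
  assumes gc: "g ` {..<d} \<subseteq> carrier G" and sym: "\<And>i j. E i j \<Longrightarrow> E j i"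
    and "(lift_edges G g d E)\<^sup>*\<^sup>* x y"
  shows "(lift_edges G g d E)\<^sup>*\<^sup>* y x"
  using assms(3)
proof induction
  case base then show ?case by simp
next
  case (step y z)
  then show ?case using lift_sym[OF gc sym step(2)]
    by (meson converse_rtranclp_into_rtranclp)
qed

lemma cancel2:
  assumes "a \<in> carrier G" "b \<in> carrier G" "z \<in> carrier G"
  shows "(a \<otimes> inv b) \<otimes> ((b \<otimes> inv a) \<otimes> z) = z"
proof -
  have "(a \<otimes> inv b) \<otimes> (b \<otimes> inv a) = a \<otimes> (inv b \<otimes> b) \<otimes> inv a"
    using assms by (simp only: m_assoc inv_closed m_closed)
  also have "\<dots> = \<one>" using assms by simp
  finally have e: "(a \<otimes> inv b) \<otimes> (b \<otimes> inv a) = \<one>" .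
  have "(a \<otimes> inv b) \<otimes> ((b \<otimes> inv a) \<otimes> z) = ((a \<otimes> inv b) \<otimes> (b \<otimes> inv a)) \<otimes> z"
    using assms by (simp add: m_assoc)
  then show ?thesis using e assms by simp
qed

lemma comp_iso:
  assumes gc: "g ` {..<d} \<subseteq> carrier G" and x: "x \<in> carrier G" and y: "y \<in> carrier G"
  shows "graph_iso (component (lift_edges G g d E) x) (lift_edges G g d E)
                   (component (lift_edges G g d E) y) (lift_edges G g d E)"
proof -
  let ?L = "lift_edges G g d E"
  define f where "f = (\<lambda>z. (y \<otimes> inv x) \<otimes> z)"
  define h where "h = (\<lambda>z. (x \<otimes> inv y) \<otimes> z)"
  have cx: "\<And>z. z \<in> component ?L x \<Longrightarrow> z \<in> carrier G"
    using rt_carrier[OF gc _ x] unfolding component_def by blast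
  have cy: "\<And>z. z \<in> component ?L y \<Longrightarrow> z \<in> carrier G"
    using rt_carrier[OF gc _ y] unfolding component_def by blast
  have a1: "y \<otimes> inv x \<in> carrier G" "x \<otimes> inv y \<in> carrier G" using x y by auto
  have fx: "f x = y" unfolding f_def using x y by (simp add: m_assoc)
  have hy: "h y = x" unfolding h_def using x y by (simp add: m_assoc)
  have "bij_betw f (component ?L x) (component ?L y)"
  proof (rule bij_betw_byWitness[where f'=h])
    show "\<forall>a\<in>component ?L x. h (f a) = a"
      using cx x y unfolding f_def h_def by (auto simp: cancel2)
    show "\<forall>a\<in>component ?L y. f (h a) = a"
      using cy x y unfolding f_def h_def by (auto simp: cancel2)
    show "f ` component ?L x \<subseteq> component ?L y"
      using rt_mult[OF gc _ x a1(1)] fx unfolding component_def f_def by auto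
    show "h ` component ?L y \<subseteq> component ?L x"
      using rt_mult[OF gc _ y a1(2)] hy unfolding component_def h_def by auto
  qed
  moreover have "\<forall>u\<in>component ?L x. \<forall>v\<in>component ?L x. ?L u v \<longleftrightarrow> ?L (f u) (f v)"
    using cx lift_mult[OF gc a1(1)] unfolding f_def by auto
  ultimately show ?thesis unfolding graph_iso_def by blast
qed

lemma cayley:
  assumes gc: "g ` {..<d} \<subseteq> carrier G" and inj: "inj_on g {..<d}"
    and sym: "\<And>i j. E i j \<Longrightarrow> E j i" and irr: "\<And>i. \<not> E i i"
  shows "\<exists>K S. is_cayley_graph G K S (component (lift_edges G g d E) \<one>) (lift_edges G g d E)"
proof -
  let ?L = "lift_edges G g d E"
  define K where "K = component ?L \<one>"
  define S where "S = {inv (g i) \<otimes> g j | i j. i < d \<and> j < d \<and> E i j}"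
  have Kc: "K \<subseteq> carrier G" using rt_carrier[OF gc _ one_closed] unfolding K_def component_def by blast
  have sub: "subgroup K G"
  proof
    show "K \<subseteq> carrier G" by (rule Kc)
    show "\<one> \<in> K" unfolding K_def component_def by simp
    fix a b assume a: "a \<in> K" and b: "b \<in> K"
    have ac: "a \<in> carrier G" "b \<in> carrier G" using a b Kc by auto
    have "?L\<^sup>*\<^sup>* (a \<otimes> \<one>) (a \<otimes> b)" using rt_mult[OF gc _ one_closed ac(1)] b unfolding K_def component_def by auto
    then have "?L\<^sup>*\<^sup>* a (a \<otimes> b)" using ac by simp
    then show "a \<otimes> b \<in> K" using a unfolding K_def component_def by auto
    have "?L\<^sup>*\<^sup>* a \<one>" using rt_sym[OF gc sym] a unfolding K_def component_def by auto
    then have "?L\<^sup>*\<^sup>* (inv a \<otimes> a) (inv a \<otimes> \<one>)" using rt_mult[OF gc _ ac(1) inv_closed[OF ac(1)]] by blast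
    then show "inv a \<in> K" using ac unfolding K_def component_def by simp
  qed
  have SK: "S \<subseteq> K"
  proof
    fix s assume "s \<in> S"
    then obtain i j where h: "i < d" "j < d" "E i j" "s = inv (g i) \<otimes> g j" unfolding S_def by blast
    have gi: "g i \<in> carrier G" "g j \<in> carrier G" using gc h by auto
    have "s = \<one> \<otimes> inv (g i) \<otimes> g j" using h gi by simp
    then have "?L \<one> s" unfolding lift_char[OF gc] using h gi by blast
    then show "s \<in> K" unfolding K_def component_def by auto
  qed
  have one: "\<one> \<notin> S"
  proof
    assume "\<one> \<in> S"
    then obtain i j where h: "i < d" "j < d" "E i j" "\<one> = inv (g i) \<otimes> g j" unfolding S_def by blast
    have gi: "g i \<in> carrier G" "g j \<in> carrier G" using gc h by auto
    have "g j = g i" using h(4) gi using inv_solve_left[of "\<one>" "g i" "g j"] by simp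
    then have "i = j" using inj h by (auto dest: inj_onD)
    then show False using h irr by auto
  qed
  have invS: "\<forall>s\<in>S. inv s \<in> S"
  proof
    fix s assume "s \<in> S"
    then obtain i j where h: "i < d" "j < d" "E i j" "s = inv (g i) \<otimes> g j" unfolding S_def by blast
    have gi: "g i \<in> carrier G" "g j \<in> carrier G" using gc h by auto
    have "inv s = inv (g j) \<otimes> g i" using h gi by (simp add: inv_mult_group)
    then show "inv s \<in> S" unfolding S_def using h sym by blast
  qed
  have edges: "\<forall>x\<in>K. \<forall>y\<in>K. ?L x y \<longleftrightarrow> inv x \<otimes> y \<in> S"
  proof (intro ballI)
    fix x y assume "x \<in> K" "y \<in> K"
    then have xy: "x \<in> carrier G" "y \<in> carrier G" using Kc by auto
    have "\<And>i j. i < d \<Longrightarrow> j < d \<Longrightarrow> (y = x \<otimes> inv (g i) \<otimes> g j) \<longleftrightarrow> (inv x \<otimes> y = inv (g i) \<otimes> g j)"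
    proof -
      fix i j assume "i < d" "j < d"
      then have gi: "g i \<in> carrier G" "g j \<in> carrier G" using gc by auto
      show "(y = x \<otimes> inv (g i) \<otimes> g j) \<longleftrightarrow> (inv x \<otimes> y = inv (g i) \<otimes> g j)"
        using gi xy by (simp add: inv_solve_left' m_assoc)
    qed
    then show "?L x y \<longleftrightarrow> inv x \<otimes> y \<in> S" unfolding lift_char[OF gc] S_def using xy by auto
  qed
  show ?thesis unfolding is_cayley_graph_def
    using sub SK one invS edges K_def by blast
qed

end


context group begin

lemma solve_eq:
  assumes "a \<in> carrier G" "b \<in> carrier G" "x \<in> carrier G" "y \<in> carrier G"
    and "a \<otimes> x = b \<otimes> y"
  shows "inv b \<otimes> a = y \<otimes> inv x"
proof -
  have "a = (b \<otimes> y) \<otimes> inv x" using assms inv_solve_right[of a "b \<otimes> y" x] by simp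
  then have "a = b \<otimes> (y \<otimes> inv x)" using assms by (simp add: m_assoc)
  then show ?thesis using assms inv_solve_left'[of "y \<otimes> inv x" b a] by simp
qed

lemma telescope:
  assumes C: "\<And>k. k \<le> n \<Longrightarrow> C k \<in> carrier G"
    and T: "\<And>k. k < n \<Longrightarrow> T k = inv (C k) \<otimes> C (Suc k)"
  shows "m \<le> n \<Longrightarrow> foldr (\<lambda>k acc. T k \<otimes> acc) [m..<n] \<one> = inv (C m) \<otimes> C n"
proof (induction "n - m" arbitrary: m)
  case 0
  then have "m = n" by simp
  then show ?case using C by simp
next
  case (Suc x)
  then have mn: "m < n" by simp
  have ih: "foldr (\<lambda>k acc. T k \<otimes> acc) [Suc m..<n] \<one> = inv (C (Suc m)) \<otimes> C n"
    using Suc by simp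
  have c: "C m \<in> carrier G" "C (Suc m) \<in> carrier G" "C n \<in> carrier G" using C mn by auto
  have "foldr (\<lambda>k acc. T k \<otimes> acc) [m..<n] \<one> = T m \<otimes> (inv (C (Suc m)) \<otimes> C n)"
    using mn ih by (simp add: upt_conv_Cons)
  also have "\<dots> = inv (C m) \<otimes> ((C (Suc m) \<otimes> inv (C (Suc m))) \<otimes> C n)"
    unfolding T[OF mn] using c by (simp only: m_assoc inv_closed m_closed)
  also have "\<dots> = inv (C m) \<otimes> C n" using c by simp
  finally show ?case .
qed

lemma R2:
  assumes R: "cond_R G g d 2" and gc: "g ` {..<d} \<subseteq> carrier G"
    and i: "i0 < d" "i1 < d" "i2 < d" "i3 < d"
    and eq: "g i0 \<otimes> inv (g i1) \<otimes> (g i2 \<otimes> inv (g i3)) = \<one>"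
  shows "i0 = i1 \<or> i1 = i2 \<or> i2 = i3 \<or> i3 = i0"
proof -
  define idx where "idx = (\<lambda>l::nat. if l = 0 then i0 else if l = 1 then i1 else if l = 2 then i2 else i3)"
  have b: "\<forall>l<2*2. idx l < d" using i unfolding idx_def by auto
  have gi: "g i2 \<in> carrier G" "g i3 \<in> carrier G" using gc i by auto
  have "alt_prod G g idx 2 = \<one>"
    unfolding alt_prod_def idx_def using eq gi by (simp add: numeral_2_eq_2)
  then obtain l where l: "l < 2*2" "idx l = idx ((l + 1) mod (2*2))"
    using R b unfolding cond_R_def by blast
  have "l = 0 \<or> l = 1 \<or> l = 2 \<or> l = 3" using l(1) by auto
  then show ?thesis using l(2) unfolding idx_def by auto
qed

lemma inter_lemma:
  assumes R: "cond_R G g d 2" and gc: "g ` {..<d} \<subseteq> carrier G" and inj: "inj_on g {..<d}"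
    and gd: "\<gamma> \<in> carrier G" "\<delta> \<in> carrier G"
    and idx: "i < d" "j < d" "k < d" "l < d"
    and e1: "\<gamma> \<otimes> g i = \<delta> \<otimes> g k" and e2: "\<gamma> \<otimes> g j = \<delta> \<otimes> g l" and ij: "i \<noteq> j"
  shows "\<gamma> = \<delta>"
proof -
  have gi: "g i \<in> carrier G" "g j \<in> carrier G" "g k \<in> carrier G" "g l \<in> carrier G" using gc idx by auto
  have A: "inv \<delta> \<otimes> \<gamma> = g k \<otimes> inv (g i)" using solve_eq[OF gd gi(1,3) e1] .
  have B: "inv \<delta> \<otimes> \<gamma> = g l \<otimes> inv (g j)" using solve_eq[OF gd gi(2,4) e2] .
  have AB: "g k \<otimes> inv (g i) = g l \<otimes> inv (g j)" using A B by simp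
  have "inv (g l \<otimes> inv (g j)) = g j \<otimes> inv (g l)" using gi by (simp add: inv_mult_group)
  then have "g k \<otimes> inv (g i) \<otimes> (g j \<otimes> inv (g l)) = \<one>"
    using AB gi by (metis m_closed inv_closed r_inv)
  then have "k = i \<or> i = j \<or> j = l \<or> l = k" using R2[OF R gc idx(3,1,2,4)] by simp
  then show ?thesis
  proof (elim disjE)
    assume "k = i" then show ?thesis using e1 gi gd by simp
  next
    assume "i = j" then show ?thesis using ij by simp
  next
    assume "j = l" then show ?thesis using e2 gi gd by simp
  next
    assume "l = k"
    then have "inv (g i) = inv (g j)" using AB gi by simp
    then have "g i = g j" using gi by (metis inv_inv)
    then have "i = j" using inj idx by (auto dest: inj_onD)
    then show ?thesis using ij by simp
  qed
qed

end


context group begin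

lemma prev_ne:
  fixes k l :: nat
  assumes "2 \<le> l" "k < l" shows "(k + l - 1) mod l \<noteq> k"
proof (cases k)
  case 0 then show ?thesis using assms by simp
next
  case (Suc k')
  then have "k + l - 1 = k' + l" by simp
  then have "(k + l - 1) mod l = k'" using assms Suc by simp
  then show ?thesis using Suc by simp
qed

lemma no_cycle:
  assumes R: "cond_R G g d l" and gc: "g ` {..<d} \<subseteq> carrier G" and l2: "2 \<le> l"
    and cyc: "cluster_cycle (carrier G) (part G g d) l"
  shows False
proof -
  obtain v c where inj_v: "inj_on v {..<l}" and inj_c: "inj_on c {..<l}"
    and vc: "\<forall>j<l. c j \<in> carrier G \<and> v j \<in> part G g d (c ((j + l - 1) mod l)) \<and> v j \<in> part G g d (c j)"
    using cyc unfolding cluster_cycle_def by blast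
  define C where "C k = c ((k + l - 1) mod l)" for k
  have "\<forall>j. \<exists>i. j < l \<longrightarrow> i < d \<and> v j = C j \<otimes> g i"
    using vc unfolding part_def C_def by blast
  then obtain a where a: "\<And>j. j < l \<Longrightarrow> a j < d \<and> v j = C j \<otimes> g (a j)" by metis
  have "\<forall>j. \<exists>i. j < l \<longrightarrow> i < d \<and> v j = c j \<otimes> g i"
    using vc unfolding part_def by blast
  then obtain b where b: "\<And>j. j < l \<Longrightarrow> b j < d \<and> v j = c j \<otimes> g (b j)" by metis
  have Cc: "C k \<in> carrier G" for k unfolding C_def using vc l2 by simp
  have CS: "C (Suc k) = c k" if "k < l" for k
  proof -
    have "Suc k + l - 1 = k + l" by simp
    then show ?thesis unfolding C_def using that by simp
  qed
  have C0: "C 0 = c (l - 1)" unfolding C_def using l2 by simp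
  have Cl: "C l = c (l - 1)"
  proof -
    have "l + l - 1 = (l - 1) + l" using l2 by simp
    then have "(l + l - 1) mod l = (l - 1) mod l" by simp
    also have "\<dots> = l - 1" using l2 by simp
    finally have e: "(l + l - 1) mod l = l - 1" .
    show ?thesis unfolding C_def by (simp only: e)
  qed
  define idx where "idx m = (if even m then a (m div 2) else b (m div 2))" for m
  have T: "g (a k) \<otimes> inv (g (b k)) = inv (C k) \<otimes> C (Suc k)" if "k < l" for k
  proof -
    have gi: "g (a k) \<in> carrier G" "g (b k) \<in> carrier G" using gc a b that by auto
    have "C (Suc k) \<otimes> g (b k) = C k \<otimes> g (a k)" using a b that CS by simp
    from solve_eq[OF Cc Cc gi(2) gi(1) this] show ?thesis by simp
  qed
  have "alt_prod G g idx l = foldr (\<lambda>k acc. (g (a k) \<otimes> inv (g (b k))) \<otimes> acc) [0..<l] \<one>"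
    unfolding alt_prod_def idx_def by simp
  also have "\<dots> = inv (C 0) \<otimes> C l"
    by (rule telescope[where C = C]) (use Cc T in auto)
  also have "\<dots> = \<one>" using C0 Cl Cc[of 0] by (simp del: l_inv Units_l_inv add: l_inv)
  finally have ap: "alt_prod G g idx l = \<one>" .
  have bd: "\<forall>m<2*l. idx m < d" unfolding idx_def using a b by auto
  obtain m where m: "m < 2*l" "idx m = idx ((m + 1) mod (2*l))"
    using R bd ap unfolding cond_R_def by blast
  show False
  proof (cases "even m")
    case True
    then obtain k where k: "m = 2*k" by blast
    then have kl: "k < l" using m by simp
    have "(m + 1) mod (2*l) = 2*k+1" using k m by simp
    then have "a k = b k" using m True k unfolding idx_def by simp
    then have "C k \<otimes> g (a k) = c k \<otimes> g (a k)" using a b kl by metis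
    moreover have "g (a k) \<in> carrier G" "c k \<in> carrier G" using gc a kl vc by auto
    ultimately have "C k = c k" using Cc[of k] right_cancel by blast
    then have "(k + l - 1) mod l = k" using inj_c kl unfolding C_def by (auto dest: inj_onD)
    then show False using prev_ne l2 kl by blast
  next
    case False
    then obtain k where k: "m = 2*k+1" using oddE by blast
    then have kl: "k < l" using m by simp
    show False
    proof (cases "Suc k < l")
      case True
      have "(m + 1) mod (2*l) = 2*(Suc k)" using k True by simp
      then have "b k = a (Suc k)" using m k unfolding idx_def by simp
      then have "v k = v (Suc k)" using a b True kl CS by metis
      then show False using inj_v True kl by (auto dest: inj_onD)
    next
      case False
      then have lk: "l = Suc k" using kl by simp
      have "(m + 1) mod (2*l) = 0" using k lk by simp
      then have "b k = a 0" using m k unfolding idx_def by simp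
      have "v 0 = C 0 \<otimes> g (a 0)" using a lk by simp
      moreover have "v k = c k \<otimes> g (b k)" using b lk by simp
      moreover have "C 0 = c k" using C0 lk by simp
      ultimately have "v k = v 0" using \<open>b k = a 0\<close> by simp
      then have "k = 0" using inj_v lk by (auto dest: inj_onD)
      then show False using lk l2 by simp
    qed
  qed
qed

end


context group begin

lemma lcan:
  assumes "a \<in> carrier G" "x \<in> carrier G" "y \<in> carrier G" "a \<otimes> x = a \<otimes> y"
  shows "x = y"
  using assms Units_l_cancel[of a x y] by simp

lemma part_a:
  assumes R: "cond_R G g d 2" and gc: "g ` {..<d} \<subseteq> carrier G" and inj: "inj_on g {..<d}"
    and d: "0 < d" and irr: "\<And>i. \<not> E i i"
  shows "is_cluster (carrier G) (lift_edges G g d E) (carrier G) (part G g d)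
        \<and> inj_on (part G g d) (carrier G)
        \<and> (\<forall>\<gamma>\<in>carrier G. graph_iso {..<d} E (part G g d \<gamma>) (lift_edges G g d E))"
proof (intro conjI)
  let ?L = "lift_edges G g d E"
  let ?X = "part G g d"
  have sub: "\<forall>\<gamma>\<in>carrier G. ?X \<gamma> \<subseteq> carrier G" unfolding part_def using gc by auto
  have cov: "carrier G = (\<Union>\<gamma>\<in>carrier G. ?X \<gamma>)"
  proof
    show "carrier G \<subseteq> (\<Union>\<gamma>\<in>carrier G. ?X \<gamma>)"
    proof
      fix x assume x: "x \<in> carrier G"
      have g0: "g 0 \<in> carrier G" using gc d by auto
      have e: "x = (x \<otimes> inv (g 0)) \<otimes> g 0" using x g0 by (simp add: m_assoc)
      have "x \<in> ?X (x \<otimes> inv (g 0))" unfolding part_def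
        by (rule image_eqI[where x=0]) (rule e, use d in simp)
      moreover have "x \<otimes> inv (g 0) \<in> carrier G" using x g0 by simp
      ultimately show "x \<in> (\<Union>\<gamma>\<in>carrier G. ?X \<gamma>)" by blast
    qed
    show "(\<Union>\<gamma>\<in>carrier G. ?X \<gamma>) \<subseteq> carrier G" using sub by blast
  qed
  have edg: "\<forall>x y. ?L x y \<longrightarrow> (\<exists>\<gamma>\<in>carrier G. x \<in> ?X \<gamma> \<and> y \<in> ?X \<gamma>)"
  proof (intro allI impI)
    fix x y assume "?L x y"
    then obtain \<gamma> i j where h: "\<gamma> \<in> carrier G" "i < d" "j < d" "x = \<gamma> \<otimes> g i" "y = \<gamma> \<otimes> g j"
      unfolding lift_edges_def by blast
    have "x \<in> ?X \<gamma>" "y \<in> ?X \<gamma>" unfolding part_def using h by auto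
    then show "\<exists>\<gamma>\<in>carrier G. x \<in> ?X \<gamma> \<and> y \<in> ?X \<gamma>" using h(1) by blast
  qed
  have two: "\<gamma> = \<delta>" if gd: "\<gamma> \<in> carrier G" "\<delta> \<in> carrier G" and u: "u \<in> ?X \<gamma> \<inter> ?X \<delta>"
    and w: "w \<in> ?X \<gamma> \<inter> ?X \<delta>" and uw: "u \<noteq> w" for \<gamma> \<delta> u w
  proof -
    obtain i k where ik: "i < d" "k < d" "u = \<gamma> \<otimes> g i" "u = \<delta> \<otimes> g k" using u unfolding part_def by auto
    obtain j l where jl: "j < d" "l < d" "w = \<gamma> \<otimes> g j" "w = \<delta> \<otimes> g l" using w unfolding part_def by auto
    have "i \<noteq> j" using ik jl uw by auto
    then show ?thesis using inter_lemma[OF R gc inj gd ik(1) jl(1) ik(2) jl(2)] ik jl by simp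
  qed
  have inter: "\<forall>\<gamma>\<in>carrier G. \<forall>\<delta>\<in>carrier G. \<gamma> \<noteq> \<delta> \<longrightarrow> ?X \<gamma> \<inter> ?X \<delta> = {} \<or> (\<exists>v. ?X \<gamma> \<inter> ?X \<delta> = {v})"
  proof (intro ballI impI)
    fix \<gamma> \<delta> assume gd: "\<gamma> \<in> carrier G" "\<delta> \<in> carrier G" "\<gamma> \<noteq> \<delta>"
    show "?X \<gamma> \<inter> ?X \<delta> = {} \<or> (\<exists>v. ?X \<gamma> \<inter> ?X \<delta> = {v})"
    proof (cases "?X \<gamma> \<inter> ?X \<delta> = {}")
      case False
      then obtain u where u: "u \<in> ?X \<gamma> \<inter> ?X \<delta>" by blast
      have "?X \<gamma> \<inter> ?X \<delta> = {u}"
      proof (intro equalityI subsetI)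
        fix w assume "w \<in> ?X \<gamma> \<inter> ?X \<delta>"
        then show "w \<in> {u}" using two[OF gd(1,2) u, of w] gd(3) by auto
      next
        fix w assume "w \<in> {u}"
        then show "w \<in> ?X \<gamma> \<inter> ?X \<delta>" using u by simp
      qed
      then show ?thesis by blast
    qed simp
  qed
  show "is_cluster (carrier G) ?L (carrier G) ?X"
    unfolding is_cluster_def by (intro conjI sub cov edg inter)
  show "inj_on ?X (carrier G)"
  proof
    fix \<gamma> \<delta> assume gd: "\<gamma> \<in> carrier G" "\<delta> \<in> carrier G" and eq: "?X \<gamma> = ?X \<delta>"
    have u: "\<gamma> \<otimes> g 0 \<in> ?X \<gamma>" unfolding part_def using d by auto
    then obtain k where k: "k < d" "\<gamma> \<otimes> g 0 = \<delta> \<otimes> g k" using eq unfolding part_def by auto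
    show "\<gamma> = \<delta>"
    proof (cases "d = 1")
      case True
      then have "k = 0" using k by simp
      then show ?thesis using k gd gc d right_cancel by auto
    next
      case False
      then have d1: "1 < d" using d by simp
      have "\<gamma> \<otimes> g 1 \<in> ?X \<gamma>" unfolding part_def using d1 by auto
      then obtain l where l: "l < d" "\<gamma> \<otimes> g 1 = \<delta> \<otimes> g l" using eq unfolding part_def by auto
      show ?thesis using inter_lemma[OF R gc inj gd d d1 k(1) l(1) k(2) l(2)] by simp
    qed
  qed
  show "\<forall>\<gamma>\<in>carrier G. graph_iso {..<d} E (?X \<gamma>) ?L"
  proof
    fix \<gamma> assume g: "\<gamma> \<in> carrier G"
    define f where "f i = \<gamma> \<otimes> g i" for i
    have "inj_on f {..<d}"
    proof
      fix i j assume "i \<in> {..<d}" "j \<in> {..<d}" "f i = f j"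
      then have "g i = g j" unfolding f_def using g gc \<open>i \<in> {..<d}\<close> \<open>j \<in> {..<d}\<close> by - (rule lcan[of \<gamma>], auto+)
      then show "i = j" using inj \<open>i \<in> {..<d}\<close> \<open>j \<in> {..<d}\<close> by (auto dest: inj_onD)
    qed
    then have bij: "bij_betw f {..<d} (?X \<gamma>)" unfolding bij_betw_def part_def f_def by auto
    have "E i j \<longleftrightarrow> ?L (f i) (f j)" if ij: "i < d" "j < d" for i j
    proof
      assume "E i j" then show "?L (f i) (f j)" unfolding lift_edges_def f_def using g ij by blast
    next
      assume "?L (f i) (f j)"
      then obtain \<delta> k l where h: "\<delta> \<in> carrier G" "k < d" "l < d" "E k l" "\<gamma> \<otimes> g i = \<delta> \<otimes> g k"
        "\<gamma> \<otimes> g j = \<delta> \<otimes> g l" unfolding lift_edges_def f_def by blast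
      show "E i j"
      proof (cases "i = j")
        case True
        then have "\<delta> \<otimes> g k = \<delta> \<otimes> g l" using h by simp
        then have "g k = g l" using h gc by - (rule lcan[of \<delta>], auto+)
        then have "k = l" using inj h by (auto dest: inj_onD)
        then show ?thesis using h irr by simp
      next
        case False
        have "\<gamma> = \<delta>" using inter_lemma[OF R gc inj g h(1) ij(1) ij(2) h(2) h(3) h(5) h(6) False] .
        then have "g i = g k" "g j = g l" using h g gc ij by - (rule lcan[of \<gamma>]; auto)+
        then have "i = k" "j = l" using inj h ij by (auto dest: inj_onD)
        then show ?thesis using h by simp
      qed
    qed
    then show "graph_iso {..<d} E (?X \<gamma>) ?L" unfolding graph_iso_def using bij by blast
  qed
qed

end

theorem proposition5p3:
  fixes G :: "('a, 'b) monoid_scheme" and g :: "nat \<Rightarrow> 'a"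
    and d :: nat and E :: "nat \<Rightarrow> nat \<Rightarrow> bool"
  assumes "group G" and "finite (carrier G)"
    and "simple_graph_on d E" and "connected_graph_on d E"
    and "g ` {..<d} \<subseteq> carrier G" and "inj_on g {..<d}"
  shows
    "(cond_G G g d 2 \<longrightarrow>
        is_cluster (carrier G) (lift_edges G g d E) (carrier G) (part G g d)
        \<and> inj_on (part G g d) (carrier G)
        \<and> (\<forall>\<gamma>\<in>carrier G. graph_iso {..<d} E (part G g d \<gamma>) (lift_edges G g d E)))
     \<and> (\<forall>p\<ge>1. cond_G G g d p \<longrightarrow>
          cluster_girth (carrier G) (part G g d) \<ge> enat (p + 1))
     \<and> (\<forall>x\<in>carrier G. \<forall>y\<in>carrier G.
          graph_iso (component (lift_edges G g d E) x) (lift_edges G g d E)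
                    (component (lift_edges G g d E) y) (lift_edges G g d E))
     \<and> (\<exists>K S. is_cayley_graph G K S (component (lift_edges G g d E) \<one>\<^bsub>G\<^esub>) (lift_edges G g d E))"
proof -
  interpret group G by fact
  have gc: "g ` {..<d} \<subseteq> carrier G" and inj: "inj_on g {..<d}" by fact+
  have sym: "\<And>i j. E i j \<Longrightarrow> E j i" and irr: "\<And>i. \<not> E i i"
    using assms(3) unfolding simple_graph_on_def by blast+
  have d: "0 < d" using assms(4) unfolding connected_graph_on_def by blast
  have A: "cond_G G g d 2 \<longrightarrow>
        is_cluster (carrier G) (lift_edges G g d E) (carrier G) (part G g d)
        \<and> inj_on (part G g d) (carrier G)
        \<and> (\<forall>\<gamma>\<in>carrier G. graph_iso {..<d} E (part G g d \<gamma>) (lift_edges G g d E))"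
  proof
    assume "cond_G G g d 2"
    then have "cond_R G g d 2" unfolding cond_G_def by simp
    then show "is_cluster (carrier G) (lift_edges G g d E) (carrier G) (part G g d)
        \<and> inj_on (part G g d) (carrier G)
        \<and> (\<forall>\<gamma>\<in>carrier G. graph_iso {..<d} E (part G g d \<gamma>) (lift_edges G g d E))"
      using part_a[where E=E, OF _ gc inj d irr] by blast
  qed
  have B: "\<forall>p\<ge>1. cond_G G g d p \<longrightarrow> cluster_girth (carrier G) (part G g d) \<ge> enat (p + 1)"
  proof (intro allI impI)
    fix p :: nat assume p: "1 \<le> p" and cg: "cond_G G g d p"
    show "cluster_girth (carrier G) (part G g d) \<ge> enat (p + 1)"
      unfolding cluster_girth_def
    proof (rule INF_greatest)
      fix l assume "l \<in> {l. 3 \<le> l \<and> cluster_cycle (carrier G) (part G g d) l}"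
      then have l: "3 \<le> l" "cluster_cycle (carrier G) (part G g d) l" by auto
      show "enat (p + 1) \<le> enat l"
      proof (rule ccontr)
        assume "\<not> enat (p + 1) \<le> enat l"
        then have "l \<le> p" by simp
        then have "cond_R G g d l" using cg l(1) unfolding cond_G_def by simp
        then show False using no_cycle[OF _ gc _ l(2)] l(1) by simp
      qed
    qed
  qed
  have C: "\<forall>x\<in>carrier G. \<forall>y\<in>carrier G.
          graph_iso (component (lift_edges G g d E) x) (lift_edges G g d E)
                    (component (lift_edges G g d E) y) (lift_edges G g d E)"
    using comp_iso[OF gc] by blast
  have D: "\<exists>K S. is_cayley_graph G K S (component (lift_edges G g d E) \<one>\<^bsub>G\<^esub>) (lift_edges G g d E)"
    using cayley[where E=E, OF gc inj sym irr] by blast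
  show ?thesis by (intro conjI A B C D)
qed

end
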